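(* Let $E$ be an irreducible IL FS encoder with $s$ states. Then for every positive integer $\ell$ there exists a state $z\in\mathcal{Z}$ such that $$\sum_{x^\ell\in\mathcal{X}^\ell}2^{-L[f(z,x^\ell)]}\le 1.$$
   Context: A finite-state (FS) encoder is a quintuple $E=(\mathcal{X},\mathcal{Y},\mathcal{Z},f,g)$, where $\mathcal{X}$ is a finite source alphabet of size $\alpha$, $\mathcal{Y}$ is a finite set of binary strings (possibly containing the empty string, of length $0$), $\mathcal{Z}$ is a finite set of $s$ states, $f:\mathcal{Z}\times\mathcal{X}\to\mathcal{Y}$ is the output function and $g:\mathcal{Z}\times\mathcal{X}\to\mathcal{Z}$ is the next-state function. For $z\in\mathcal{Z}$ and $x^n=(x_1,\dots,x_n)\in\mathcal{X}^n$, set $z_1=z$, $z_{i+1}=g(z_i,x_i)$; write $g(z,x^n)=z_{n+1}$ and let $f(z,x^n)$ denote the binary string obtained by concatenating $f(z_1,x_1),\dots,f(z_n,x_n)$; its length is $L[f(z,x^n)]=\sum_{i=1}^n L[f(z_i,x_i)]$, where $L(\cdot)$ denotes the length of a binary string. The encoder is information lossless (IL) if for every $z\in\mathcal{Z}$ and every $n\ge1$, the map $x^n\mapsto (f(z,x^n),g(z,x^n))$ is injective on $\mathcal{X}^n$. The Kraft matrix of $E$ is the $s\times s$ nonnegative matrix $K$ with entries $K_{zz'}=\sum_{\{x\in\mathcal{X}:\ g(z,x)=z'\}}2^{-L[f(z,x)]}$. The encoder is called irreducible if $K$ is an irreducible matrix, equivalently, if for every $z,z'\in\mathcal{Z}$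 there exist $n\ge 1$ and $x^n$ with $g(z,x^n)=z'$. *)

theory Defs
  imports Complex_Main
begin

text \<open>Finite-state encoder with source alphabet X, state set Z,
  output function f (binary strings as bool lists) and next-state function g.\<close>

definition fs_encoder :: "'x set \<Rightarrow> 'z set \<Rightarrow> ('z \<Rightarrow> 'x \<Rightarrow> bool list) \<Rightarrow> ('z \<Rightarrow> 'x \<Rightarrow> 'z) \<Rightarrow> bool" where
  "fs_encoder X Z f g \<longleftrightarrow> finite X \<and> X \<noteq> {} \<and> finite Z \<and> Z \<noteq> {} \<and>
     (\<forall>z\<in>Z. \<forall>x\<in>X. g z x \<in> Z)"

fun out_seq :: "('z \<Rightarrow> 'x \<Rightarrow> bool list) \<Rightarrow> ('z \<Rightarrow> 'x \<Rightarrow> 'z) \<Rightarrow> 'z \<Rightarrow> 'x list \<Rightarrow> bool list" where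
  "out_seq f g z [] = []"
| "out_seq f g z (x # xs) = f z x @ out_seq f g (g z x) xs"

fun state_seq :: "('z \<Rightarrow> 'x \<Rightarrow> 'z) \<Rightarrow> 'z \<Rightarrow> 'x list \<Rightarrow> 'z" where
  "state_seq g z [] = z"
| "state_seq g z (x # xs) = state_seq g (g z x) xs"

definition words :: "'x set \<Rightarrow> nat \<Rightarrow> 'x list set" where
  "words X n = {xs. length xs = n \<and> set xs \<subseteq> X}"

definition info_lossless :: "'x set \<Rightarrow> 'z set \<Rightarrow> ('z \<Rightarrow> 'x \<Rightarrow> bool list) \<Rightarrow> ('z \<Rightarrow> 'x \<Rightarrow> 'z) \<Rightarrow> bool" where
  "info_lossless X Z f g \<longleftrightarrow>
     (\<forall>z\<in>Z. \<forall>n\<ge>1. inj_on (\<lambda>xs. (out_seq f g z xs, state_seq g z xs)) (words X n))"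

definition irreducible_enc :: "'x set \<Rightarrow> 'z set \<Rightarrow> ('z \<Rightarrow> 'x \<Rightarrow> 'z) \<Rightarrow> bool" where
  "irreducible_enc X Z g \<longleftrightarrow>
     (\<forall>z\<in>Z. \<forall>z'\<in>Z. \<exists>n\<ge>1. \<exists>xs\<in>words X n. state_seq g z xs = z')"

end

theory Submission
  imports Defs
begin

definition Ssum :: "'x set \<Rightarrow> ('z \<Rightarrow> 'x \<Rightarrow> bool list) \<Rightarrow> ('z \<Rightarrow> 'x \<Rightarrow> 'z) \<Rightarrow> 'z \<Rightarrow> nat \<Rightarrow> real" where
  "Ssum X f g z n = (\<Sum>xs\<in>words X n. (2::real) powr (- real (length (out_seq f g z xs))))"

lemma out_seq_append:
  "out_seq f g z (xs @ ys) = out_seq f g z xs @ out_seq f g (state_seq g z xs) ys"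
  by (induction xs arbitrary: z) auto

lemma state_seq_append:
  "state_seq g z (xs @ ys) = state_seq g (state_seq g z xs) ys"
  by (induction xs arbitrary: z) auto

lemma state_seq_in:
  assumes "\<forall>z\<in>Z. \<forall>x\<in>X. g z x \<in> Z" "z \<in> Z" "set xs \<subseteq> X"
  shows "state_seq g z xs \<in> Z"
  using assms by (induction xs arbitrary: z) auto

lemma finite_words: "finite X \<Longrightarrow> finite (words X n)"
proof -
  assume "finite X"
  have "words X n = {xs. set xs \<subseteq> X \<and> length xs = n}" unfolding words_def by auto
  thus ?thesis using finite_lists_length_eq[OF \<open>finite X\<close>] by simp
qed

lemma words_add:
  "words X (a + b) = (\<lambda>(u, v). u @ v) ` (words X a \<times> words X b)"
proof
  show "words X (a + b) \<subseteq> (\<lambda>(u, v). u @ v) ` (words X a \<times> words X b)"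
  proof
    fix xs assume "xs \<in> words X (a + b)"
    hence "xs = take a xs @ drop a xs" "take a xs \<in> words X a" "drop a xs \<in> words X b"
      unfolding words_def by (auto dest: in_set_takeD in_set_dropD)
    thus "xs \<in> (\<lambda>(u, v). u @ v) ` (words X a \<times> words X b)"
      by (intro rev_image_eqI[of "(take a xs, drop a xs)"]) auto
  qed
next
  show "(\<lambda>(u, v). u @ v) ` (words X a \<times> words X b) \<subseteq> words X (a + b)"
    by (auto simp: words_def)
qed

lemma words_inj: "inj_on (\<lambda>(u, v). u @ v) (words X a \<times> words X b)"
  by (auto simp: inj_on_def words_def)

lemma Ssum_add:
  assumes "finite X"
  shows "Ssum X f g z (a + b) =
    (\<Sum>u\<in>words X a. (2::real) powr (- real (length (out_seq f g z u))) * Ssum X f g (state_seq g z u) b)"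
proof -
  have "Ssum X f g z (a + b) = (\<Sum>p\<in>words X a \<times> words X b.
      (2::real) powr (- real (length (out_seq f g z (fst p @ snd p)))))"
    unfolding Ssum_def words_add
    by (subst sum.reindex[OF words_inj]) (simp add: case_prod_beta)
  also have "\<dots> = (\<Sum>u\<in>words X a. \<Sum>v\<in>words X b.
      (2::real) powr (- real (length (out_seq f g z (u @ v)))))"
    by (subst sum.cartesian_product) (simp add: case_prod_beta)
  also have "\<dots> = (\<Sum>u\<in>words X a. \<Sum>v\<in>words X b.
      (2::real) powr (- real (length (out_seq f g z u))) *
      (2::real) powr (- real (length (out_seq f g (state_seq g z u) v))))"
    by (simp add: out_seq_append powr_add[symmetric] algebra_simps)
  also have "\<dots> = (\<Sum>u\<in>words X a. (2::real) powr (- real (length (out_seq f g z u))) * Ssum X f g (state_seq g z u) b)"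
    by (simp add: Ssum_def sum_distrib_left)
  finally show ?thesis .
qed

lemma Ssum_nonneg: "Ssum X f g z n \<ge> 0"
  unfolding Ssum_def by (simp add: sum_nonneg)

lemma out_len_bound:
  assumes "\<forall>z\<in>Z. \<forall>x\<in>X. g z x \<in> Z" "z \<in> Z" "set xs \<subseteq> X"
    and "\<And>z x. z \<in> Z \<Longrightarrow> x \<in> X \<Longrightarrow> length (f z x) \<le> Lm"
  shows "length (out_seq f g z xs) \<le> length xs * Lm"
  using assms(2,3)
proof (induction xs arbitrary: z)
  case (Cons x xs)
  have "g z x \<in> Z" using assms(1) Cons by auto
  hence "length (out_seq f g (g z x) xs) \<le> length xs * Lm" using Cons by auto
  moreover have "length (f z x) \<le> Lm" using assms(4) Cons by auto
  ultimately show ?case by simp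
qed simp

lemma sum_len_eq: "(\<Sum>w\<in>{w::bool list. length w = k}. (2::real) powr (- real (length w))) = 1"
proof -
  have e: "{w::bool list. length w = k} = {xs. set xs \<subseteq> UNIV \<and> length xs = k}" by auto
  have c: "card {w::bool list. length w = k} = 2 ^ k"
    unfolding e by (subst card_lists_length_eq) auto
  have "(\<Sum>w\<in>{w::bool list. length w = k}. (2::real) powr (- real (length w)))
      = (\<Sum>w\<in>{w::bool list. length w = k}. (2::real) powr (- real k))" by simp
  also have "\<dots> = 2 ^ k * (2::real) powr (- real k)" using c by simp
  also have "\<dots> = 1" by (simp add: powr_minus powr_realpow)
  finally show ?thesis .
qed

lemma finite_len_le: "finite {w::bool list. length w \<le> N}"
proof -
  have "{w::bool list. length w \<le> N} = (\<Union>k\<le>N. {xs. length xs = k})" by auto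
  moreover have "finite {xs::bool list. length xs = k}" for k
    using finite_lists_length_eq[of "UNIV::bool set" k] by simp
  ultimately show ?thesis by simp
qed

lemma sum_len_le: "(\<Sum>w\<in>{w::bool list. length w \<le> N}. (2::real) powr (- real (length w))) = real N + 1"
proof (induction N)
  case 0
  have "{w::bool list. length w \<le> 0} = {w. length w = 0}" by auto
  then show ?case using sum_len_eq[of 0] by simp
next
  case (Suc N)
  have "{w::bool list. length w \<le> Suc N} = {w. length w \<le> N} \<union> {w. length w = Suc N}" by auto
  moreover have "finite {w::bool list. length w = Suc N}"
    using finite_len_le[of "Suc N"] by (rule finite_subset[rotated]) auto
  ultimately have "(\<Sum>w\<in>{w::bool list. length w \<le> Suc N}. (2::real) powr (- real (length w)))
     = (\<Sum>w\<in>{w::bool list. length w \<le> N}. (2::real) powr (- real (length w)))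
     + (\<Sum>w\<in>{w::bool list. length w = Suc N}. (2::real) powr (- real (length w)))"
    by (simp only:) (rule sum.union_disjoint, auto simp: finite_len_le)
  then show ?case using Suc sum_len_eq[of "Suc N"] by simp
qed

lemma upper_bound:
  fixes Z :: "'z set"
  assumes enc: "fs_encoder X Z f g" and il: "info_lossless X Z f g"
    and z: "z \<in> Z" and n: "n \<ge> 1"
    and Lm: "\<And>z x. z \<in> Z \<Longrightarrow> x \<in> X \<Longrightarrow> length (f z x) \<le> Lm"
  shows "Ssum X f g z n \<le> real (card Z) * (real (n * Lm) + 1)"
proof -
  define p where "p = (\<lambda>xs. (out_seq f g z xs, state_seq g z xs))"
  define h where "h = (\<lambda>q::bool list \<times> 'z. (2::real) powr (- real (length (fst q))))"
  define T where "T = {w::bool list. length w \<le> n * Lm} \<times> Z"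
  have inj: "inj_on p (words X n)" using il z n unfolding info_lossless_def p_def by auto
  have fZ: "finite Z" and cl: "\<forall>z\<in>Z. \<forall>x\<in>X. g z x \<in> Z" using enc unfolding fs_encoder_def by auto
  have sub: "p ` words X n \<subseteq> T"
  proof
    fix q assume "q \<in> p ` words X n"
    then obtain xs where xs: "xs \<in> words X n" "q = p xs" by auto
    have "length (out_seq f g z xs) \<le> length xs * Lm"
      by (rule out_len_bound[OF cl z _ Lm]) (use xs in \<open>auto simp: words_def\<close>)
    moreover have "state_seq g z xs \<in> Z"
      by (rule state_seq_in[OF cl z]) (use xs in \<open>auto simp: words_def\<close>)
    ultimately show "q \<in> T" using xs unfolding T_def p_def words_def by auto
  qed
  have fT: "finite T" unfolding T_def using fZ finite_len_le by auto
  have "Ssum X f g z n = (\<Sum>xs\<in>words X n. h (p xs))"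
    unfolding Ssum_def h_def p_def by simp
  also have "\<dots> = (\<Sum>q\<in>p ` words X n. h q)" by (simp add: sum.reindex[OF inj])
  also have "\<dots> \<le> (\<Sum>q\<in>T. h q)"
    by (rule sum_mono2[OF fT sub]) (simp add: h_def)
  also have "\<dots> = (\<Sum>w\<in>{w::bool list. length w \<le> n * Lm}. \<Sum>z'\<in>Z. (2::real) powr (- real (length w)))"
    unfolding T_def h_def sum.cartesian_product by (rule sum.cong) auto
  also have "\<dots> = real (card Z) * (real (n * Lm) + 1)"
    by (simp add: sum_distrib_left[symmetric] sum_len_le mult.commute)
  finally show ?thesis .
qed

theorem mainTheorem4:
  fixes X :: "'x set" and Z :: "'z set"
    and f :: "'z \<Rightarrow> 'x \<Rightarrow> bool list" and g :: "'z \<Rightarrow> 'x \<Rightarrow> 'z"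
    and l :: nat
  assumes "fs_encoder X Z f g"
    and "info_lossless X Z f g"
    and "irreducible_enc X Z g"
    and "l \<ge> 1"
  shows "\<exists>z\<in>Z. (\<Sum>xs\<in>words X l. (2::real) powr (- real (length (out_seq f g z xs)))) \<le> 1"
proof (rule ccontr)
  assume "\<not> ?thesis"
  hence gt: "\<forall>z\<in>Z. Ssum X f g z l > 1" unfolding Ssum_def by auto
  have fX: "finite X" and fZ: "finite Z" and nZ: "Z \<noteq> {}" and cl: "\<forall>z\<in>Z. \<forall>x\<in>X. g z x \<in> Z"
    using assms(1) unfolding fs_encoder_def by auto
  define c where "c = Min ((\<lambda>z. Ssum X f g z l) ` Z)"
  have c1: "c > 1" unfolding c_def using fZ nZ gt by (subst Min_gr_iff) auto
  have cle: "c \<le> Ssum X f g z l" if "z \<in> Z" for z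
    unfolding c_def using fZ that by (intro Min_le) auto
  define Lm where "Lm = Max ((\<lambda>(z, x). length (f z x)) ` (Z \<times> X))"
  have Lm: "length (f z x) \<le> Lm" if "z \<in> Z" "x \<in> X" for z x
    unfolding Lm_def using fZ fX that by (intro Max_ge) auto
  have low: "\<forall>z\<in>Z. c ^ m \<le> Ssum X f g z (l * m)" for m
  proof (induction m)
    case 0
    have "words X 0 = {[]}" by (auto simp: words_def)
    then show ?case by (simp add: Ssum_def)
  next
    case (Suc m)
    show ?case
    proof
      fix z assume z: "z \<in> Z"
      have "Ssum X f g z (l * Suc m) = (\<Sum>u\<in>words X l. (2::real) powr (- real (length (out_seq f g z u))) * Ssum X f g (state_seq g z u) (l * m))"
        using Ssum_add[OF fX, of f g z l "l * m"] by simp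
      also have "\<dots> \<ge> (\<Sum>u\<in>words X l. (2::real) powr (- real (length (out_seq f g z u))) * c ^ m)"
      proof (rule sum_mono)
        fix u assume "u \<in> words X l"
        hence "state_seq g z u \<in> Z" using state_seq_in[OF cl z] by (auto simp: words_def)
        thus "(2::real) powr (- real (length (out_seq f g z u))) * c ^ m \<le> (2::real) powr (- real (length (out_seq f g z u))) * Ssum X f g (state_seq g z u) (l * m)"
          using Suc by (intro mult_left_mono) auto
      qed
      finally have "Ssum X f g z l * c ^ m \<le> Ssum X f g z (l * Suc m)"
        by (simp add: Ssum_def sum_distrib_right)
      moreover have "c * c ^ m \<le> Ssum X f g z l * c ^ m"
        using cle[OF z] c1 by (intro mult_right_mono) auto
      ultimately show "c ^ Suc m \<le> Ssum X f g z (l * Suc m)" by simp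
    qed
  qed
  obtain z0 where z0: "z0 \<in> Z" using nZ by auto
  have bnd: "c ^ m \<le> real (card Z) * (real (l * m * Lm) + 1)" if "m \<ge> 1" for m
  proof -
    have "l * m \<ge> 1" using assms(4) that by simp
    thus ?thesis using low[of m] z0 upper_bound[OF assms(1,2) z0 _ Lm] by (meson order.trans)
  qed
  define A where "A = real (card Z) * real (l * Lm)"
  define B where "B = real (card Z)"
  have lim: "(\<lambda>m. A * (real m / c ^ m) + B * (inverse c) ^ m) \<longlonglongrightarrow> A * 0 + B * 0"
    using c1
    by (intro tendsto_intros lim_n_over_pown LIMSEQ_power_zero) (auto simp: field_simps)
  hence "eventually (\<lambda>m. A * (real m / c ^ m) + B * (inverse c) ^ m < 1) sequentially"
    by (intro order_tendstoD(2)) auto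
  then obtain M where M: "\<And>m. m \<ge> M \<Longrightarrow> A * (real m / c ^ m) + B * (inverse c) ^ m < 1"
    unfolding eventually_sequentially by blast
  define m where "m = max M 1"
  have cp: "c ^ m > 0" using c1 by simp
  have "A * (real m / c ^ m) + B * (inverse c) ^ m < 1" using M m_def by simp
  hence "(A * real m + B) / c ^ m < 1" by (simp add: power_inverse add_divide_distrib divide_inverse mult.assoc distrib_right)
  hence "A * real m + B < c ^ m" using cp by (simp add: field_simps)
  moreover have "c ^ m \<le> A * real m + B" using bnd[of m] m_def
    by (simp add: A_def B_def algebra_simps)
  ultimately show False by simp
qed

end
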